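(* Consider the Random Majority Model (RMM) on the cycle $C_n$ started from an initial coloring with $b_0=pn$ blue nodes, for some $0\le p\le 1$. Then $\mathbb{E}[b_t]=pn$ for every $t\in\mathbb{N}$, where $b_t$ is the number of blue nodes after round $t$.
   Context: A coloring is a map from the nodes to $\{b,w\}$. In RMM, all nodes update simultaneously in each round: a node adopts the color strictly more frequent among its neighbors in the previous round, and in case of a tie chooses blue or white independently and uniformly at random. *)

theory Defs
  imports "HOL-Probability.Probability"
begin

datatype color = Blue | White

text \<open>Cycle C_n on nodes 0..n-1; node i has neighbours (i+1) mod n and (i+n-1) mod n.
  A coloring is a map nat => color (only values on {0..<n} matter).\<close>

definition cyc_nbrs :: "nat \<Rightarrow> nat \<Rightarrow> nat list" where
  "cyc_nbrs n i = [(i + n - 1) mod n, (i + 1) mod n]"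

definition node_update :: "nat \<Rightarrow> (nat \<Rightarrow> color) \<Rightarrow> nat \<Rightarrow> color pmf" where
  "node_update n c i =
     (let nb = length (filter (\<lambda>j. c j = Blue) (cyc_nbrs n i));
          nw = length (filter (\<lambda>j. c j = White) (cyc_nbrs n i))
      in if nb > nw then return_pmf Blue
         else if nw > nb then return_pmf White
         else pmf_of_set {Blue, White})"

definition rmm_step :: "nat \<Rightarrow> (nat \<Rightarrow> color) \<Rightarrow> (nat \<Rightarrow> color) pmf" where
  "rmm_step n c = Pi_pmf {..<n} White (node_update n c)"

fun rmm :: "nat \<Rightarrow> (nat \<Rightarrow> color) \<Rightarrow> nat \<Rightarrow> (nat \<Rightarrow> color) pmf" where
  "rmm n c0 0 = return_pmf c0"
| "rmm n c0 (Suc t) = bind_pmf (rmm n c0 t) (rmm_step n)"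

definition blue_count :: "nat \<Rightarrow> (nat \<Rightarrow> color) \<Rightarrow> nat" where
  "blue_count n c = card {i. i < n \<and> c i = Blue}"

end

theory Submission
  imports Defs
begin

definition bi :: "(nat \<Rightarrow> color) \<Rightarrow> nat \<Rightarrow> real" where
  "bi c j = (if c j = Blue then 1 else 0)"

lemma blue_count_sum: "real (blue_count n c) = (\<Sum>i<n. bi c i)"
proof -
  have e: "{i. i < n \<and> c i = Blue} = {i\<in>{..<n}. c i = Blue}" by auto
  have "real (blue_count n c) = (\<Sum>i\<in>{i\<in>{..<n}. c i = Blue}. 1)"
    unfolding blue_count_def e by simp
  also have "\<dots> = (\<Sum>i<n. bi c i)"
    unfolding bi_def by (subst sum.inter_filter) auto
  finally show ?thesis .
qed

lemma pmf_node: "pmf (node_update n c i) Blue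
   = (bi c ((i + n - 1) mod n) + bi c ((i + 1) mod n)) / 2"
  unfolding node_update_def cyc_nbrs_def bi_def
  by (cases "c ((i + n - 1) mod n)"; cases "c ((i + 1) mod n)")
     (auto simp: pmf_of_set pmf_return)

lemma m1: "(i::nat) < n \<Longrightarrow> (i + 1) mod n = (if i + 1 = n then 0 else i + 1)"
  by auto

lemma m2: "(i::nat) < n \<Longrightarrow> (i + n - 1) mod n = (if i = 0 then n - 1 else i - 1)"
proof (cases "i = 0")
  case True
  assume "i < n" then show ?thesis using True by simp
next
  case False
  assume "i < n"
  then have "i + n - 1 = (i - 1) + n" using False by simp
  then have "(i + n - 1) mod n = ((i - 1) + n) mod n" by simp
  also have "\<dots> = i - 1" using \<open>i < n\<close> by simp
  finally show ?thesis using False by simp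
qed

lemma shift1: "(n::nat) > 0 \<Longrightarrow> (\<Sum>i<n. g ((i + 1) mod n)) = (\<Sum>i<n. (g i :: real))"
proof -
  assume n: "n > 0"
  have inj: "inj_on (\<lambda>i. (i + 1) mod n) {..<n}"
  proof (rule inj_onI)
    fix i j assume "i \<in> {..<n}" "j \<in> {..<n}" "(i + 1) mod n = (j + 1) mod n"
    then show "i = j" using m1[of i n] m1[of j n] by (auto split: if_splits)
  qed
  have "bij_betw (\<lambda>i. (i + 1) mod n) {..<n} {..<n}"
  proof -
    have img: "(\<lambda>i. (i + 1) mod n) ` {..<n} \<subseteq> {..<n}" using n by auto
    show ?thesis unfolding bij_betw_def using endo_inj_surj[OF _ img inj] inj by auto
  qed
  then show ?thesis by (rule sum.reindex_bij_betw)
qed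

lemma shift2: "(n::nat) > 0 \<Longrightarrow> (\<Sum>i<n. g ((i + n - 1) mod n)) = (\<Sum>i<n. (g i :: real))"
proof -
  assume n: "n > 0"
  have "(\<Sum>i<n. g i) = (\<Sum>i<n. g ((((i + 1) mod n) + n - 1) mod n))"
  proof (rule sum.cong[OF refl])
    fix i assume "i \<in> {..<n}"
    then have "(((i + 1) mod n) + n - 1) mod n = i"
      using m1[of i n] by (auto simp: m2)
    then show "g i = g ((((i + 1) mod n) + n - 1) mod n)" by simp
  qed
  also have "\<dots> = (\<Sum>i<n. g ((i + n - 1) mod n))"
    by (rule shift1[OF n])
  finally show ?thesis by simp
qed

lemma exp_bi: "measure_pmf.expectation (rmm_step n c) (\<lambda>x. bi x i) = (if i < n then pmf (node_update n c i) Blue else 0)"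
proof -
  have "measure_pmf.expectation (rmm_step n c) (\<lambda>x. bi x i)
      = measure_pmf.expectation (map_pmf (\<lambda>f. f i) (rmm_step n c)) (\<lambda>y. if y = Blue then 1 else 0)"
    by (simp add: bi_def)
  also have "map_pmf (\<lambda>f. f i) (rmm_step n c) = (if i < n then node_update n c i else return_pmf White)"
    unfolding rmm_step_def by (subst Pi_pmf_component) auto
  also have "measure_pmf.expectation (if i < n then node_update n c i else return_pmf White) (\<lambda>y. if y = Blue then 1 else (0::real))
     = (\<Sum>a\<in>{Blue}. (if a = Blue then 1 else 0) * pmf (if i < n then node_update n c i else return_pmf White) a)"
    by (rule integral_measure_pmf_real) (auto split: if_splits)
  finally show ?thesis by (simp add: pmf_return)
qed

lemma step_exp:
  assumes n: "n > 0"
  shows "measure_pmf.expectation (rmm_step n c) (\<lambda>x. real (blue_count n x)) = real (blue_count n c)"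
proof -
  have "measure_pmf.expectation (rmm_step n c) (\<lambda>x. real (blue_count n x))
      = measure_pmf.expectation (rmm_step n c) (\<lambda>x. \<Sum>i<n. bi x i)"
    by (simp add: blue_count_sum)
  also have "\<dots> = (\<Sum>i<n. measure_pmf.expectation (rmm_step n c) (\<lambda>x. bi x i))"
  proof (rule Bochner_Integration.integral_sum)
    fix i show "integrable (measure_pmf (rmm_step n c)) (\<lambda>x. bi x i)"
      by (rule measure_pmf.integrable_const_bound[where B=1]) (auto simp: bi_def)
  qed
  also have "\<dots> = (\<Sum>i<n. (bi c ((i + n - 1) mod n) + bi c ((i + 1) mod n)) / 2)"
    by (simp add: exp_bi pmf_node)
  also have "\<dots> = ((\<Sum>i<n. bi c ((i + n - 1) mod n)) + (\<Sum>i<n. bi c ((i + 1) mod n))) / 2"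
    by (simp add: sum.distrib sum_divide_distrib[symmetric])
  also have "\<dots> = real (blue_count n c)"
    using shift1[OF n] shift2[OF n] by (simp add: blue_count_sum)
  finally show ?thesis .
qed

lemma bc_le: "\<bar>real (blue_count n c)\<bar> \<le> real n"
proof -
  have "blue_count n c \<le> card {..<n}"
    unfolding blue_count_def by (rule card_mono) auto
  then show ?thesis by simp
qed

lemma exp_bind:
  fixes f :: "(nat \<Rightarrow> color) \<Rightarrow> real"
  assumes "\<And>x. \<bar>f x\<bar> \<le> B"
  shows "measure_pmf.expectation (bind_pmf M N) f
    = measure_pmf.expectation M (\<lambda>x. measure_pmf.expectation (N x) f)"
  unfolding measure_pmf_bind
  apply (rule integral_bind[where K="count_space UNIV" and B=B and B'=1])
  using assms apply simp_all
  using measurable_measure_pmf[of N] 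
  apply (simp add: measurable_cong_sets)
  done

theorem theorem4p2:
  fixes n :: nat and p :: real and c0 :: "nat \<Rightarrow> color" and t :: nat
  assumes "n \<ge> 3" and "0 \<le> p" and "p \<le> 1"
    and "real (blue_count n c0) = p * real n"
  shows "measure_pmf.expectation (rmm n c0 t) (\<lambda>c. real (blue_count n c)) = p * real n"
proof (induction t)
  case 0
  then show ?case using assms by simp
next
  case (Suc t)
  have n: "n > 0" using assms by simp
  have "measure_pmf.expectation (rmm n c0 (Suc t)) (\<lambda>c. real (blue_count n c))
     = measure_pmf.expectation (rmm n c0 t) (\<lambda>x. measure_pmf.expectation (rmm_step n x) (\<lambda>c. real (blue_count n c)))"
    by (simp only: rmm.simps) (rule exp_bind[OF bc_le])
  also have "\<dots> = measure_pmf.expectation (rmm n c0 t) (\<lambda>c. real (blue_count n c))"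
    by (simp add: step_exp[OF n])
  finally show ?case using Suc by simp
qed

end
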